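(* Let $A$ and $B$ be probabilistic models, let $\phi:A\to B$ be an embedding, and let $\psi:B\to A$ be a morphism with $\psi\circ\phi=\mathrm{id}_{A}$ (the identity on $X(A)$). Then $\psi$ is test-preserving, i.e. $\psi(F)\in\mathcal{M}(A)$ for every $F\in\mathcal{M}(B)$.
   Context: A test space is a collection $\mathcal{M}$ of nonempty sets ("tests") that is irredundant ($E,F\in\mathcal{M}$, $E\subseteq F$ imply $E=F$); $X=\bigcup\mathcal{M}$ is its outcome set. A probability weight is a function $\alpha:X\to[0,1]$ with $\sum_{x\in E}\alpha(x)=1$ for all $E\in\mathcal{M}$. A probabilistic model $A$ is a pair $(\mathcal{M}(A),\Omega(A))$ with $\mathcal{M}(A)$ a test space with outcome set $X(A)$ and $\Omega(A)$ a set of probability weights (states); standing assumptions: $\Omega(A)$ is convex, closed under uniform limits, and positive (for every $x\in X(A)$ there is $\alpha\in\Omega(A)$ with $\alpha(x)>0$). An event is a subset of some test; $\alpha(a)=\sum_{x\in a}\alpha(x)$. Events $a,b$ are orthogonal ($a\perp b$) if disjoint with $a\cup b$ an event; complements if $a\perp b$ and $a\cup b$ is a test; perspective ($a\sim b$) if they have a common complement; for outcomes, $x\perp y$ means $\{x\}\perp\{y\}$. A morphism $\phi:A\to B$ is a map $\phi:X(A)\to X(B)$ such that (i) $x\perp y\Rightarrow\phi(x)\perp\phi(y)$; (ii) $\phi(a)$ is an event of $B$ for every event $a$ of $A$; (iii) $a\sim b\Rightarrow\phi(a)\sim\phi(b)$; (iv) for every $\beta\in\Omega(B)$ there are $\alpha\in\Omega(A)$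 and $t\ge0$ with $\beta(\phi(x))=t\alpha(x)$ for all $x\in X(A)$. A morphism is test-preserving if it maps tests to tests, and an embedding if it is test-preserving and injective. *)

theory Defs
  imports "HOL-Analysis.Analysis"
begin

definition test_space :: "'a set set \<Rightarrow> bool" where
  "test_space M \<longleftrightarrow> (\<forall>E\<in>M. E \<noteq> {}) \<and> (\<forall>E\<in>M. \<forall>F\<in>M. E \<subseteq> F \<longrightarrow> E = F)"

definition outcomes :: "'a set set \<Rightarrow> 'a set" where
  "outcomes M = \<Union>M"

definition prob_weight :: "'a set set \<Rightarrow> ('a \<Rightarrow> real) \<Rightarrow> bool" where
  "prob_weight M \<alpha> \<longleftrightarrow> (\<forall>x\<in>outcomes M. 0 \<le> \<alpha> x \<and> \<alpha> x \<le> 1) \<and> (\<forall>E\<in>M. (\<alpha> has_sum 1) E)"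

type_synonym 'a model = "'a set set \<times> ('a \<Rightarrow> real) set"

definition tests :: "'a model \<Rightarrow> 'a set set" where "tests A = fst A"
definition states :: "'a model \<Rightarrow> ('a \<Rightarrow> real) set" where "states A = snd A"
definition X :: "'a model \<Rightarrow> 'a set" where "X A = outcomes (tests A)"

definition prob_model :: "'a model \<Rightarrow> bool" where
  "prob_model A \<longleftrightarrow>
     test_space (tests A) \<and>
     (\<forall>\<alpha>\<in>states A. prob_weight (tests A) \<alpha>) \<and>
     \<comment> \<open>convex\<close>
     (\<forall>\<alpha>\<in>states A. \<forall>\<beta>\<in>states A. \<forall>t::real. 0 \<le> t \<and> t \<le> 1 \<longrightarrow>
        (\<lambda>x. t * \<alpha> x + (1 - t) * \<beta> x) \<in> states A) \<and>
     \<comment> \<open>closed under uniform limits (on the outcome set)\<close>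
     (\<forall>f g. (\<forall>n. f n \<in> states A) \<and> uniform_limit (X A) f g sequentially
        \<and> prob_weight (tests A) g \<longrightarrow> (\<exists>\<alpha>\<in>states A. \<forall>x\<in>X A. \<alpha> x = g x)) \<and>
     \<comment> \<open>positive\<close>
     (\<forall>x\<in>X A. \<exists>\<alpha>\<in>states A. \<alpha> x > 0)"

definition event :: "'a model \<Rightarrow> 'a set \<Rightarrow> bool" where
  "event A a \<longleftrightarrow> (\<exists>E\<in>tests A. a \<subseteq> E)"

definition orth :: "'a model \<Rightarrow> 'a set \<Rightarrow> 'a set \<Rightarrow> bool" where
  "orth A a b \<longleftrightarrow> a \<inter> b = {} \<and> event A (a \<union> b)"

definition complements :: "'a model \<Rightarrow> 'a set \<Rightarrow> 'a set \<Rightarrow> bool" where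
  "complements A a b \<longleftrightarrow> orth A a b \<and> a \<union> b \<in> tests A"

definition perspective :: "'a model \<Rightarrow> 'a set \<Rightarrow> 'a set \<Rightarrow> bool" where
  "perspective A a b \<longleftrightarrow> (\<exists>c. complements A a c \<and> complements A b c)"

definition orth_out :: "'a model \<Rightarrow> 'a \<Rightarrow> 'a \<Rightarrow> bool" where
  "orth_out A x y \<longleftrightarrow> orth A {x} {y}"

definition morphism :: "'a model \<Rightarrow> 'b model \<Rightarrow> ('a \<Rightarrow> 'b) \<Rightarrow> bool" where
  "morphism A B \<phi> \<longleftrightarrow>
     (\<forall>x\<in>X A. \<forall>y\<in>X A. orth_out A x y \<longrightarrow> orth_out B (\<phi> x) (\<phi> y)) \<and>
     (\<forall>a. event A a \<longrightarrow> event B (\<phi> ` a)) \<and>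
     (\<forall>a b. event A a \<and> event A b \<and> perspective A a b \<longrightarrow> perspective B (\<phi> ` a) (\<phi> ` b)) \<and>
     (\<forall>\<beta>\<in>states B. \<exists>\<alpha>\<in>states A. \<exists>t::real. t \<ge> 0 \<and> (\<forall>x\<in>X A. \<beta> (\<phi> x) = t * \<alpha> x))"

definition test_preserving :: "'a model \<Rightarrow> 'b model \<Rightarrow> ('a \<Rightarrow> 'b) \<Rightarrow> bool" where
  "test_preserving A B \<phi> \<longleftrightarrow> morphism A B \<phi> \<and> (\<forall>E\<in>tests A. \<phi> ` E \<in> tests B)"

definition embedding :: "'a model \<Rightarrow> 'b model \<Rightarrow> ('a \<Rightarrow> 'b) \<Rightarrow> bool" where
  "embedding A B \<phi> \<longleftrightarrow> test_preserving A B \<phi> \<and> inj_on \<phi> (X A)"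

end

theory Submission
  imports Defs
begin

theorem lemma1p23:
  fixes A :: "'a model" and B :: "'b model"
    and \<phi> :: "'a \<Rightarrow> 'b" and \<psi> :: "'b \<Rightarrow> 'a"
  assumes "prob_model A" and "prob_model B"
    and "embedding A B \<phi>"
    and "morphism B A \<psi>"
    and "\<forall>x\<in>X A. \<psi> (\<phi> x) = x"
  shows "test_preserving B A \<psi>"
  unfolding test_preserving_def
proof (intro conjI ballI)
  show "morphism B A \<psi>" by fact
  fix F assume F: "F \<in> tests B"
  have FX: "F \<subseteq> X B" using F by (auto simp: X_def outcomes_def)
  have mB: "\<forall>x\<in>X B. \<forall>y\<in>X B. orth_out B x y \<longrightarrow> orth_out A (\<psi> x) (\<psi> y)"
    and evB: "\<forall>a. event B a \<longrightarrow> event A (\<psi> ` a)"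
    and stB: "\<forall>\<alpha>\<in>states A. \<exists>\<beta>\<in>states B. \<exists>t::real. t \<ge> 0 \<and> (\<forall>x\<in>X B. \<alpha> (\<psi> x) = t * \<beta> x)"
    using assms(4) unfolding morphism_def by blast+
  have emb: "\<forall>E\<in>tests A. \<phi> ` E \<in> tests B" "inj_on \<phi> (X A)"
    using assms(3) unfolding embedding_def test_preserving_def by blast+
  have pwA: "\<forall>\<alpha>\<in>states A. prob_weight (tests A) \<alpha>" and posA: "\<forall>x\<in>X A. \<exists>\<alpha>\<in>states A. \<alpha> x > 0"
    using assms(1) unfolding prob_model_def by blast+
  have pwB: "\<forall>\<beta>\<in>states B. prob_weight (tests B) \<beta>"
    using assms(2) unfolding prob_model_def by blast
  have injF: "inj_on \<psi> F"
  proof (rule inj_onI, rule ccontr)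
    fix y z assume yz: "y \<in> F" "z \<in> F" "\<psi> y = \<psi> z" "y \<noteq> z"
    have "orth_out B y z" using yz F unfolding orth_out_def orth_def event_def by auto
    then have "orth_out A (\<psi> y) (\<psi> z)" using mB FX yz by blast
    then show False using yz unfolding orth_out_def orth_def by auto
  qed
  have "event B F" using F unfolding event_def by blast
  then obtain E where E: "E \<in> tests A" "\<psi> ` F \<subseteq> E" using evB unfolding event_def by blast
  have EX: "E \<subseteq> X A" using E by (auto simp: X_def outcomes_def)
  have phiE: "\<phi> ` E \<in> tests B" using emb E by blast
  have phiEX: "\<phi> ` E \<subseteq> X B" using phiE by (auto simp: X_def outcomes_def)
  have injE: "inj_on \<phi> E" using emb(2) EX inj_on_subset by blast
  have sum1: "(\<alpha> has_sum 1) (\<psi> ` F)" if a: "\<alpha> \<in> states A" for \<alpha>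
  proof -
    obtain \<beta> t where b: "\<beta> \<in> states B" "t \<ge> 0" "\<forall>x\<in>X B. \<alpha> (\<psi> x) = t * \<beta> x"
      using stB a by blast
    have bF: "(\<beta> has_sum 1) F" "(\<beta> has_sum 1) (\<phi> ` E)"
      using pwB b(1) F phiE unfolding prob_weight_def by blast+
    have "((\<lambda>x. t * \<beta> x) has_sum t) (\<phi> ` E)" using has_sum_cmult_right[OF bF(2), of t] by simp
    then have "((\<lambda>x. \<alpha> (\<psi> x)) has_sum t) (\<phi> ` E)"
      by (rule has_sum_cong[THEN iffD1, rotated]) (use b phiEX in auto)
    then have "(((\<lambda>x. \<alpha> (\<psi> x)) \<circ> \<phi>) has_sum t) E" using has_sum_reindex[OF injE] by blast
    then have "(\<alpha> has_sum t) E"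
      by (rule has_sum_cong[THEN iffD1, rotated]) (use assms(5) EX in auto)
    moreover have "(\<alpha> has_sum 1) E" using pwA a E unfolding prob_weight_def by blast
    ultimately have t1: "t = 1" using has_sum_unique by blast
    have "((\<lambda>x. t * \<beta> x) has_sum t) F" using has_sum_cmult_right[OF bF(1), of t] by simp
    then have "((\<lambda>x. \<alpha> (\<psi> x)) has_sum t) F"
      by (rule has_sum_cong[THEN iffD1, rotated]) (use b FX in auto)
    then have "((\<alpha> \<circ> \<psi>) has_sum 1) F" using t1 by (simp add: o_def)
    then show ?thesis using has_sum_reindex[OF injF] by blast
  qed
  have "E \<subseteq> \<psi> ` F"
  proof
    fix x assume x: "x \<in> E"
    show "x \<in> \<psi> ` F"
    proof (rule ccontr)
      assume nx: "x \<notin> \<psi> ` F"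
      obtain \<alpha> where a: "\<alpha> \<in> states A" "\<alpha> x > 0" using posA x EX by blast
      have h1: "(\<alpha> has_sum (\<alpha> x + 1)) (insert x (\<psi> ` F))"
        using has_sum_insert[OF nx sum1[OF a(1)]] .
      have h2: "(\<alpha> has_sum 1) E" using pwA a E unfolding prob_weight_def by blast
      have nn: "\<forall>y\<in>X A. 0 \<le> \<alpha> y" using pwA a unfolding prob_weight_def X_def by blast
      have "\<alpha> x + 1 \<le> 1"
        by (rule has_sum_mono_neutral[OF h1 h2]) (use x E nn EX in auto)
      then show False using a by simp
    qed
  qed
  then show "\<psi> ` F \<in> tests A" using E by auto
qed

end
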